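(* For every $-1\le j\le d-2$ and every $j$-cell $\rho$ of $T_{d,k}$ (for $j=-1$, $\rho=\emptyset$), the link $\mathrm{lk}_{T_{d,k}}(\rho)=\{\sigma\in T_{d,k}:\sigma\cap\rho=\emptyset,\ \sigma\cup\rho\in T_{d,k}\}$ is isomorphic, as a simplicial complex, to $T_{d-|\rho|,k}$.
   Context: For $d,k\ge1$, the $k$-regular $d$-dimensional arboreal complex $T_{d,k}$ is the simplicial complex obtained by starting from a single $d$-simplex $\mathcal T$, attaching to each of its $(d-1)$-faces $k-1$ new $d$-simplices each using a new vertex, and inductively attaching to each $(d-1)$-face created in the previous step $k-1$ new $d$-simplices each using a new vertex; $T_{d,k}$ is the union over all steps. *)

theory Defs
  imports Main
begin

text \<open>Vertices: Orig i (i = 0..d) are the vertices of the initial d-simplex;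
  Fresh nv u c is the c-th new vertex (1 <= c <= k-1) attached to the (d-1)-face
  obtained by deleting the vertex u from the facet whose own new vertex is nv
  (nv = None for the initial simplex).  This naming guarantees every attached
  simplex uses a brand-new vertex.\<close>

datatype vtx = Orig nat | Fresh "vtx option" vtx nat

text \<open>Facets, each paired with the new vertex it was created with (None for the
  initial simplex).\<close>

inductive_set arb_facets :: "nat \<Rightarrow> nat \<Rightarrow> (vtx set \<times> vtx option) set"
  for d k :: nat where
  root: "({Orig i | i. i \<le> d}, None) \<in> arb_facets d k"
| step: "\<lbrakk> (\<sigma>, nv) \<in> arb_facets d k; u \<in> \<sigma>; nv \<noteq> Some u; 1 \<le> c; c \<le> k - 1 \<rbrakk>
         \<Longrightarrow> (insert (Fresh nv u c) (\<sigma> - {u}), Some (Fresh nv u c)) \<in> arb_facets d k"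

definition arboreal :: "nat \<Rightarrow> nat \<Rightarrow> vtx set set" where
  "arboreal d k = {\<tau>. \<exists>\<sigma> nv. (\<sigma>, nv) \<in> arb_facets d k \<and> \<tau> \<subseteq> \<sigma>}"

definition link :: "'a set set \<Rightarrow> 'a set \<Rightarrow> 'a set set" where
  "link K \<rho> = {\<sigma> \<in> K. \<sigma> \<inter> \<rho> = {} \<and> \<sigma> \<union> \<rho> \<in> K}"

text \<open>Isomorphism of simplicial complexes (given as downward closed set systems;
  the vertex set of K is the union of its faces).\<close>
definition simp_iso :: "'a set set \<Rightarrow> 'b set set \<Rightarrow> bool" where
  "simp_iso K L \<longleftrightarrow> (\<exists>f. bij_betw f (\<Union>K) (\<Union>L) \<and>
      (\<forall>\<sigma>. \<sigma> \<subseteq> \<Union>K \<longrightarrow> (\<sigma> \<in> K \<longleftrightarrow> f ` \<sigma> \<in> L)))"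

end

theory Submission
  imports Defs
begin

abbreviation F where "F \<equiv> arb_facets"

lemma nv_None: "(\<sigma>, None) \<in> F d k \<Longrightarrow> \<sigma> = {Orig i | i. i \<le> d}"
  by (cases rule: arb_facets.cases) auto

lemma nv_mem: "(\<sigma>, Some w) \<in> F d k \<Longrightarrow> w \<in> \<sigma>"
  by (cases rule: arb_facets.cases) auto

lemma nv_Fresh: "(\<sigma>, Some w) \<in> F d k \<Longrightarrow> \<exists>a b c. w = Fresh a b c"
  by (cases rule: arb_facets.cases) auto

lemma nv_parent: "(\<sigma>, Some (Fresh nv u c)) \<in> F d k \<Longrightarrow> \<exists>\<sigma>p. (\<sigma>p, nv) \<in> F d k \<and> u \<in> \<sigma>p"
  by (cases rule: arb_facets.cases) auto

fun B :: "vtx option \<Rightarrow> nat" where "B None = 0" | "B (Some w) = size w"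

lemma size_inv: "(\<sigma>, nv) \<in> F d k \<Longrightarrow> (\<forall>y\<in>\<sigma>. size y \<le> B nv) \<and> (\<forall>w y. nv = Some w \<longrightarrow> y \<in> \<sigma> \<longrightarrow> y \<noteq> w \<longrightarrow> size y < size w)"
proof (induction rule: arb_facets.induct)
  case root
  then show ?case by auto
next
  case (step \<sigma> nv u c)
  have "size (Fresh nv u c) > B nv" by (cases nv) auto
  then show ?case using step.IH by fastforce
qed

lemma size_lt_new: "(\<sigma>, nv) \<in> F d k \<Longrightarrow> y \<in> \<sigma> \<Longrightarrow> size y < size (Fresh nv u c)"
proof -
  assume a: "(\<sigma>, nv) \<in> F d k" "y \<in> \<sigma>"
  have "size (Fresh nv u c) > B nv" by (cases nv) auto
  with size_inv[OF a(1)] a(2) show ?thesis by fastforce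
qed

lemma fresh_notin: "(\<sigma>, nv) \<in> F d k \<Longrightarrow> Fresh nv u c \<notin> \<sigma>"
  using size_lt_new by blast

lemma card_facet: "(\<sigma>, nv) \<in> F d k \<Longrightarrow> finite \<sigma> \<and> card \<sigma> = Suc d"
proof (induction rule: arb_facets.induct)
  case root
  have "{Orig i | i. i \<le> d} = Orig ` {..d}" by auto
  moreover have "card (Orig ` {..d}) = Suc d" by (subst card_image) (auto simp: inj_on_def)
  ultimately show ?case by simp
next
  case (step \<sigma> nv u c)
  have "Fresh nv u c \<notin> \<sigma> - {u}" using fresh_notin[OF step.hyps(1)] by blast
  then show ?case using step by (simp add: card_Diff_singleton)
qed

lemma facet_unique: "(\<sigma>, nv) \<in> F d k \<Longrightarrow> (\<sigma>', nv) \<in> F d k \<Longrightarrow> \<sigma> = \<sigma>'"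
proof (induction arbitrary: \<sigma>' rule: arb_facets.induct)
  case root
  then show ?case using nv_None by blast
next
  case (step \<sigma> nv u c)
  from step.prems show ?case
    by (cases rule: arb_facets.cases) (use step.IH in auto)
qed

lemma exists_root: "(\<tau>, nv) \<in> F d k \<Longrightarrow> \<rho> \<subseteq> \<tau> \<Longrightarrow>
   \<exists>\<sigma>0 nv0. (\<sigma>0, nv0) \<in> F d k \<and> \<rho> \<subseteq> \<sigma>0 \<and> (\<forall>w. nv0 = Some w \<longrightarrow> w \<in> \<rho>)"
proof (induction rule: arb_facets.induct)
  case root
  then show ?case using arb_facets.root by blast
next
  case (step \<sigma> nv u c)
  show ?case
  proof (cases "Fresh nv u c \<in> \<rho>")
    case True
    then show ?thesis using step arb_facets.step[OF step.hyps] by blast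
  next
    case False
    then show ?thesis using step by blast
  qed
qed

lemma vertex_cases: "(\<tau>, nv) \<in> F d k \<Longrightarrow> y \<in> \<tau> \<Longrightarrow> (\<exists>i\<le>d. y = Orig i) \<or> (\<exists>\<sigma>. (\<sigma>, Some y) \<in> F d k)"
proof (induction rule: arb_facets.induct)
  case root
  then show ?case by auto
next
  case (step \<sigma> nv u c)
  then show ?case using arb_facets.step[OF step.hyps] by auto
qed

fun phi :: "(nat \<Rightarrow> vtx) \<Rightarrow> vtx option \<Rightarrow> vtx \<Rightarrow> vtx" where
  "phi h n0 (Orig i) = h i"
| "phi h n0 (Fresh nv u c) = Fresh (case nv of None \<Rightarrow> n0 | Some w \<Rightarrow> Some (phi h n0 w)) (phi h n0 u) c"

locale lkset =
  fixes d k :: nat and \<rho> \<sigma>0 :: "vtx set" and nv0 :: "vtx option" and h :: "nat \<Rightarrow> vtx"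
  assumes F0: "(\<sigma>0, nv0) \<in> F d k" and rs: "\<rho> \<subseteq> \<sigma>0"
    and nv0r: "\<And>w. nv0 = Some w \<Longrightarrow> w \<in> \<rho>"
    and hb: "bij_betw h {0..<Suc (d - card \<rho>)} (\<sigma>0 - \<rho>)"
begin

abbreviation "m \<equiv> d - card \<rho>"
abbreviation "\<phi> \<equiv> phi h nv0"
definition "\<psi> nv = (case nv of None \<Rightarrow> nv0 | Some w \<Rightarrow> Some (\<phi> w))"

lemma psi_simps[simp]: "\<psi> None = nv0" "\<psi> (Some w) = Some (\<phi> w)"
  by (simp_all add: \<psi>_def)

lemma phi_Fresh: "\<phi> (Fresh nv u c) = Fresh (\<psi> nv) (\<phi> u) c"
  by (cases nv) auto

declare phi.simps(2)[simp del]
declare phi_Fresh[simp]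

lemma root_img: "\<phi> ` {Orig i | i. i \<le> m} = \<sigma>0 - \<rho>"
proof -
  have "{Orig i | i. i \<le> m} = Orig ` {0..<Suc m}" by auto
  then have "\<phi> ` {Orig i | i. i \<le> m} = h ` {0..<Suc m}" by (simp add: image_image)
  then show ?thesis using hb by (simp add: bij_betw_def)
qed

lemma root_inj: "inj_on \<phi> {Orig i | i. i \<le> m}"
  using hb unfolding bij_betw_def inj_on_def by auto

lemma sizes_s0: "y \<in> \<sigma>0 \<Longrightarrow> size y < size (Fresh nv0 u c)"
  using size_lt_new[OF F0] .

lemma FW: "(\<tau>', nv') \<in> F m k \<Longrightarrow> (\<phi> ` \<tau>' \<union> \<rho>, \<psi> nv') \<in> F d k \<and> \<phi> ` \<tau>' \<inter> \<rho> = {} \<and> inj_on \<phi> \<tau>'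
   \<and> (\<forall>w. nv' = Some w \<longrightarrow> (\<forall>y\<in>\<sigma>0. size y < size (\<phi> w)))"
proof (induction rule: arb_facets.induct)
  case root
  have "\<phi> ` {Orig i | i. i \<le> m} \<union> \<rho> = \<sigma>0" using root_img rs by auto
  then show ?case using F0 root_img root_inj by auto
next
  case (step \<sigma>' nv' u' c)
  let ?\<sigma> = "\<phi> ` \<sigma>' \<union> \<rho>"
  have P: "(?\<sigma>, \<psi> nv') \<in> F d k" and D: "\<phi> ` \<sigma>' \<inter> \<rho> = {}" and I: "inj_on \<phi> \<sigma>'"
    using step.IH by auto
  have u: "\<phi> u' \<in> ?\<sigma>" using step.hyps by auto
  have ur: "\<phi> u' \<notin> \<rho>" using D step.hyps by auto
  have nvne: "\<psi> nv' \<noteq> Some (\<phi> u')"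
  proof (cases nv')
    case None
    then show ?thesis using nv0r ur by auto
  next
    case (Some w)
    have "w \<in> \<sigma>'" using nv_mem step.hyps Some by blast
    then show ?thesis using Some step.hyps I by (auto dest: inj_onD)
  qed
  have new: "(insert (Fresh (\<psi> nv') (\<phi> u') c) (?\<sigma> - {\<phi> u'}), Some (Fresh (\<psi> nv') (\<phi> u') c)) \<in> F d k"
    using arb_facets.step[OF P u nvne step.hyps(4,5)] .
  have eq1: "?\<sigma> - {\<phi> u'} = \<phi> ` (\<sigma>' - {u'}) \<union> \<rho>"
    using ur I step.hyps(2) by (auto simp: inj_on_def)
  have xn: "Fresh (\<psi> nv') (\<phi> u') c \<notin> ?\<sigma>" using fresh_notin[OF P] .
  have eq2: "\<phi> ` insert (Fresh nv' u' c) (\<sigma>' - {u'}) \<union> \<rho> = insert (Fresh (\<psi> nv') (\<phi> u') c) (?\<sigma> - {\<phi> u'})"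
    using eq1 by (simp add: phi_Fresh)
  have c1: "(\<phi> ` insert (Fresh nv' u' c) (\<sigma>' - {u'}) \<union> \<rho>, \<psi> (Some (Fresh nv' u' c))) \<in> F d k"
    using new eq2 by (simp add: phi_Fresh)
  have xn': "\<phi> (Fresh nv' u' c) \<notin> ?\<sigma>" using xn by simp
  have c2: "\<phi> ` insert (Fresh nv' u' c) (\<sigma>' - {u'}) \<inter> \<rho> = {}"
  proof -
    have "\<phi> ` insert (Fresh nv' u' c) (\<sigma>' - {u'}) \<subseteq> insert (\<phi> (Fresh nv' u' c)) (\<phi> ` \<sigma>')" by blast
    then show ?thesis using D xn' by blast
  qed
  have c3: "inj_on \<phi> (insert (Fresh nv' u' c) (\<sigma>' - {u'}))"
  proof -
    have "inj_on \<phi> (\<sigma>' - {u'})" using I by (rule inj_on_subset) blast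
    moreover have "\<phi> (Fresh nv' u' c) \<notin> \<phi> ` (\<sigma>' - {u'})" using xn' by blast
    ultimately show ?thesis using inj_on_insert by blast
  qed
  have c4: "\<forall>y\<in>\<sigma>0. size y < size (\<phi> (Fresh nv' u' c))"
  proof
    fix y assume y: "y \<in> \<sigma>0"
    show "size y < size (\<phi> (Fresh nv' u' c))"
    proof (cases nv')
      case None
      then show ?thesis using sizes_s0[OF y] by (simp add: phi_Fresh)
    next
      case (Some w)
      then have "size y < size (\<phi> w)" using step.IH y by auto
      then show ?thesis using Some by (simp add: phi_Fresh)
    qed
  qed
  show ?case using c1 c2 c3 c4 by blast
qed

lemma root_eq: "\<phi> ` {Orig i | i. i \<le> m} \<union> \<rho> = \<sigma>0"
  using root_img rs by auto

lemma BW: "(\<tau>, nv) \<in> F d k \<Longrightarrow> \<rho> \<subseteq> \<tau> \<Longrightarrow> \<exists>\<tau>' nv'. (\<tau>', nv') \<in> F m k \<and> \<tau> = \<phi> ` \<tau>' \<union> \<rho> \<and> nv = \<psi> nv'"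
proof (induction rule: arb_facets.induct)
  case root
  have "nv0 = None"
  proof (rule ccontr)
    assume "nv0 \<noteq> None"
    then obtain w where w: "nv0 = Some w" by auto
    then have "w \<in> \<rho>" using nv0r by auto
    then have "\<exists>i. w = Orig i" using root.prems by auto
    moreover have "\<exists>a b c. w = Fresh a b c" using nv_Fresh F0 w by blast
    ultimately show False by auto
  qed
  then have "\<sigma>0 = {Orig i | i. i \<le> d}" using nv_None F0 by blast
  moreover have "({Orig i | i. i \<le> m}, None) \<in> F m k" by (rule arb_facets.root)
  moreover have "None = \<psi> None" unfolding psi_simps(1) using \<open>nv0 = None\<close> by (rule sym)
  moreover have "{Orig i | i. i \<le> d} = \<phi> ` {Orig i | i. i \<le> m} \<union> \<rho>" using root_eq \<open>\<sigma>0 = _\<close> by simp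
  ultimately show ?case by blast
next
  case (step \<sigma> nv u c)
  let ?x = "Fresh nv u c"
  have Fn: "(insert ?x (\<sigma> - {u}), Some ?x) \<in> F d k" using arb_facets.step[OF step.hyps] .
  show ?case
  proof (cases "?x \<in> \<rho>")
    case True
    have xs0: "?x \<in> \<sigma>0" using True rs by auto
    show ?thesis
    proof (cases nv0)
      case None
      then have "\<sigma>0 = {Orig i | i. i \<le> d}" using nv_None F0 by blast
      then show ?thesis using xs0 by auto
    next
      case (Some w)
      have wr: "w \<in> \<rho>" using nv0r Some by auto
      have "w = ?x"
      proof (rule ccontr)
        assume ne: "w \<noteq> ?x"
        have "size w < size ?x" using size_inv[OF Fn] wr step.prems ne by auto
        moreover have "size ?x < size w" using size_inv[OF F0] Some xs0 ne by auto
        ultimately show False by simp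
      qed
      then have "(\<sigma>0, Some ?x) \<in> F d k" using F0 Some by simp
      then have "insert ?x (\<sigma> - {u}) = \<sigma>0" using facet_unique[OF Fn] by blast
      moreover have "({Orig i | i. i \<le> m}, None) \<in> F m k" by (rule arb_facets.root)
      moreover have "Some ?x = \<psi> None" unfolding psi_simps(1) using Some \<open>w = ?x\<close> by simp
      moreover have "insert ?x (\<sigma> - {u}) = \<phi> ` {Orig i | i. i \<le> m} \<union> \<rho>" using root_eq \<open>insert ?x (\<sigma> - {u}) = \<sigma>0\<close> by simp
      ultimately show ?thesis by blast
    qed
  next
    case False
    have rs': "\<rho> \<subseteq> \<sigma>" using False step.prems by auto
    obtain \<sigma>' nv' where P: "(\<sigma>', nv') \<in> F m k" and se: "\<sigma> = \<phi> ` \<sigma>' \<union> \<rho>" and ne: "nv = \<psi> nv'"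
      using step.IH[OF rs'] by blast
    have D: "\<phi> ` \<sigma>' \<inter> \<rho> = {}" and I: "inj_on \<phi> \<sigma>'" using FW[OF P] by auto
    have "?x \<notin> \<sigma>" using fresh_notin[OF step.hyps(1)] .
    then have ur: "u \<notin> \<rho>" using step.prems step.hyps(2) by auto
    then obtain u' where u': "u' \<in> \<sigma>'" "u = \<phi> u'" using se step.hyps(2) by auto
    have nvne: "nv' \<noteq> Some u'" using ne u' step.hyps(3) by auto
    have C: "(insert (Fresh nv' u' c) (\<sigma>' - {u'}), Some (Fresh nv' u' c)) \<in> F m k"
      using arb_facets.step[OF P u'(1) nvne step.hyps(4,5)] .
    have eq1: "\<sigma> - {u} = \<phi> ` (\<sigma>' - {u'}) \<union> \<rho>"
      using ur I u' se by (auto simp: inj_on_def)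
    have "insert ?x (\<sigma> - {u}) = \<phi> ` insert (Fresh nv' u' c) (\<sigma>' - {u'}) \<union> \<rho>"
      using eq1 ne u' by simp
    moreover have "Some ?x = \<psi> (Some (Fresh nv' u' c))" using ne u' by simp
    ultimately show ?thesis using C by blast
  qed
qed

definition "V = \<Union>{\<tau>'. \<exists>nv'. (\<tau>', nv') \<in> F m k}"

lemma V_notin: "y \<in> V \<Longrightarrow> \<phi> y \<notin> \<rho>"
proof -
  assume "y \<in> V"
  then obtain \<tau>' nv' where "(\<tau>', nv') \<in> F m k" "y \<in> \<tau>'" unfolding V_def by blast
  then show ?thesis using FW[OF \<open>(\<tau>', nv') \<in> F m k\<close>] by blast
qed

lemma V_parent: "Fresh nv u c \<in> V \<Longrightarrow> u \<in> V \<and> (\<forall>w. nv = Some w \<longrightarrow> w \<in> V)"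
proof -
  assume "Fresh nv u c \<in> V"
  then obtain \<tau> n where "(\<tau>, n) \<in> F m k" "Fresh nv u c \<in> \<tau>" unfolding V_def by blast
  then obtain \<sigma> where "(\<sigma>, Some (Fresh nv u c)) \<in> F m k" using vertex_cases by blast
  then obtain \<sigma>p where p: "(\<sigma>p, nv) \<in> F m k" "u \<in> \<sigma>p" using nv_parent by blast
  have "\<forall>w. nv = Some w \<longrightarrow> w \<in> \<sigma>p" using nv_mem p(1) by blast
  then show ?thesis using p unfolding V_def by blast
qed

lemma V_inj: "inj_on \<phi> V"
proof -
  have "\<And>b. a \<in> V \<Longrightarrow> b \<in> V \<Longrightarrow> \<phi> a = \<phi> b \<Longrightarrow> a = b" for a
  proof (induction a)
    case (Orig i)
    then obtain \<tau> n where t: "(\<tau>, n) \<in> F m k" "Orig i \<in> \<tau>" unfolding V_def by blast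
    have im: "i \<le> m" using vertex_cases[OF t] by (auto dest: nv_Fresh)
    then have ps: "\<phi> (Orig i) \<in> \<sigma>0" using root_img by blast
    show ?case
    proof (cases b)
      case (Orig j)
      obtain \<tau>2 n2 where t2: "(\<tau>2, n2) \<in> F m k" "b \<in> \<tau>2" using Orig.prems unfolding V_def by blast
      have jm: "j \<le> m" using vertex_cases[OF t2] Orig by (auto dest: nv_Fresh)
      have "h i = h j" using Orig.prems Orig by simp
      then show ?thesis using hb im jm Orig unfolding bij_betw_def inj_on_def by auto
    next
      case (Fresh a1 a2 a3)
      obtain \<tau>2 n2 where t2: "(\<tau>2, n2) \<in> F m k" "b \<in> \<tau>2" using Orig.prems unfolding V_def by blast
      obtain \<sigma>b where "(\<sigma>b, Some b) \<in> F m k" using vertex_cases[OF t2] Fresh by blast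
      then have "size (\<phi> (Orig i)) < size (\<phi> b)" using ps by (auto dest!: FW)
      then show ?thesis using Orig.prems by simp
    qed
  next
    case (Fresh nv u c)
    have pa: "u \<in> V" "\<forall>w. nv = Some w \<longrightarrow> w \<in> V" using V_parent[OF Fresh.prems(1)] by auto
    show ?case
    proof (cases b)
      case (Orig j)
      obtain \<tau>2 n2 where t2: "(\<tau>2, n2) \<in> F m k" "b \<in> \<tau>2" using Fresh.prems unfolding V_def by blast
      have jm: "j \<le> m" using vertex_cases[OF t2] Orig by (auto dest: nv_Fresh)
      then have ps: "\<phi> b \<in> \<sigma>0" using root_img Orig by blast
      obtain \<tau> n where t: "(\<tau>, n) \<in> F m k" "Fresh nv u c \<in> \<tau>" using Fresh.prems unfolding V_def by blast
      obtain \<sigma>b where "(\<sigma>b, Some (Fresh nv u c)) \<in> F m k" using vertex_cases[OF t] by blast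
      then have "size (\<phi> b) < size (\<phi> (Fresh nv u c))" using ps by (auto dest!: FW simp del: phi_Fresh)
      then show ?thesis using Fresh.prems(3) by (simp del: phi_Fresh)
    next
      case (Fresh nv2 u2 c2)
      have pb: "u2 \<in> V" "\<forall>w. nv2 = Some w \<longrightarrow> w \<in> V" using V_parent[of nv2 u2 c2] Fresh.prems(2) \<open>b = _\<close> by auto
      have e: "\<psi> nv = \<psi> nv2" "\<phi> u = \<phi> u2" "c = c2" using Fresh.prems \<open>b = _\<close> by auto
      have "u = u2" using Fresh.IH(2) pa pb e by blast
      moreover have "nv = nv2"
      proof (cases nv)
        case None
        show ?thesis
        proof (cases nv2)
          case (Some w2)
          then have "nv0 = Some (\<phi> w2)" using e(1) None by (simp only: psi_simps)
          then have "\<phi> w2 \<in> \<rho>" using nv0r by auto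
          then show ?thesis using V_notin pb Some by blast
        qed (use None in auto)
      next
        case (Some w)
        show ?thesis
        proof (cases nv2)
          case None
          then have "nv0 = Some (\<phi> w)" using e(1) Some by (simp only: psi_simps)
          then have "\<phi> w \<in> \<rho>" using nv0r by auto
          then show ?thesis using V_notin pa Some by blast
        next
          case (Some w2)
          then have "\<phi> w = \<phi> w2" using e \<open>nv = Some w\<close> by simp
          then show ?thesis using Fresh.IH(1)[of w w2] pa pb Some \<open>nv = Some w\<close> by auto
        qed
      qed
      ultimately show ?thesis using e \<open>b = _\<close> by simp
    qed
  qed
  then show ?thesis unfolding inj_on_def by blast
qed


lemma link_eq: "link (arboreal d k) \<rho> = {\<sigma>. \<exists>\<tau>' nv'. (\<tau>', nv') \<in> F m k \<and> \<sigma> \<subseteq> \<phi> ` \<tau>'}"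
proof (intro set_eqI iffI)
  fix \<sigma> assume "\<sigma> \<in> link (arboreal d k) \<rho>"
  then have di: "\<sigma> \<inter> \<rho> = {}" and "\<sigma> \<union> \<rho> \<in> arboreal d k" unfolding link_def by auto
  then obtain \<tau> nv where t: "(\<tau>, nv) \<in> F d k" "\<sigma> \<union> \<rho> \<subseteq> \<tau>" unfolding arboreal_def by blast
  then obtain \<tau>' nv' where "(\<tau>', nv') \<in> F m k" "\<tau> = \<phi> ` \<tau>' \<union> \<rho>" using BW[OF t(1)] by blast
  then show "\<sigma> \<in> {\<sigma>. \<exists>\<tau>' nv'. (\<tau>', nv') \<in> F m k \<and> \<sigma> \<subseteq> \<phi> ` \<tau>'}" using t(2) di by blast
next
  fix \<sigma> assume "\<sigma> \<in> {\<sigma>. \<exists>\<tau>' nv'. (\<tau>', nv') \<in> F m k \<and> \<sigma> \<subseteq> \<phi> ` \<tau>'}"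
  then obtain \<tau>' nv' where t: "(\<tau>', nv') \<in> F m k" "\<sigma> \<subseteq> \<phi> ` \<tau>'" by blast
  have f: "(\<phi> ` \<tau>' \<union> \<rho>, \<psi> nv') \<in> F d k" and D: "\<phi> ` \<tau>' \<inter> \<rho> = {}" using FW[OF t(1)] by auto
  have "\<sigma> \<in> arboreal d k" using f t(2) unfolding arboreal_def by blast
  moreover have "\<sigma> \<union> \<rho> \<in> arboreal d k" using f t(2) unfolding arboreal_def by blast
  moreover have "\<sigma> \<inter> \<rho> = {}" using D t(2) by blast
  ultimately show "\<sigma> \<in> link (arboreal d k) \<rho>" unfolding link_def by blast
qed

lemma iso: "simp_iso (arboreal m k) (link (arboreal d k) \<rho>)"
proof -
  have UA: "\<Union>(arboreal m k) = V" unfolding arboreal_def V_def by blast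
  have UL: "\<Union>(link (arboreal d k) \<rho>) = \<phi> ` V" unfolding link_eq V_def by blast
  have B: "bij_betw \<phi> V (\<phi> ` V)" using V_inj by (simp add: bij_betw_def)
  have C: "\<sigma> \<in> arboreal m k \<longleftrightarrow> \<phi> ` \<sigma> \<in> link (arboreal d k) \<rho>" if s: "\<sigma> \<subseteq> V" for \<sigma>
  proof
    assume "\<sigma> \<in> arboreal m k"
    then obtain \<tau>' nv' where "(\<tau>', nv') \<in> F m k" "\<sigma> \<subseteq> \<tau>'" unfolding arboreal_def by blast
    then show "\<phi> ` \<sigma> \<in> link (arboreal d k) \<rho>" unfolding link_eq by blast
  next
    assume "\<phi> ` \<sigma> \<in> link (arboreal d k) \<rho>"
    then obtain \<tau>' nv' where t: "(\<tau>', nv') \<in> F m k" "\<phi> ` \<sigma> \<subseteq> \<phi> ` \<tau>'" unfolding link_eq by blast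
    have tv: "\<tau>' \<subseteq> V" using t(1) unfolding V_def by blast
    have "\<sigma> \<subseteq> \<tau>'"
    proof
      fix x assume x: "x \<in> \<sigma>"
      then obtain y where y: "y \<in> \<tau>'" "\<phi> x = \<phi> y" using t(2) by blast
      then have "x = y" using inj_onD[OF V_inj y(2)] x s tv by blast
      then show "x \<in> \<tau>'" using y by simp
    qed
    then show "\<sigma> \<in> arboreal m k" using t(1) unfolding arboreal_def by blast
  qed
  show ?thesis unfolding simp_iso_def UA UL
    by (intro exI[of _ \<phi>] conjI allI impI B C)
qed

end

lemma simp_iso_sym: "simp_iso K L \<Longrightarrow> simp_iso L K"
proof -
  assume "simp_iso K L"
  then obtain f where bc: "bij_betw f (\<Union>K) (\<Union>L) \<and> (\<forall>\<sigma>. \<sigma> \<subseteq> \<Union>K \<longrightarrow> (\<sigma> \<in> K \<longleftrightarrow> f ` \<sigma> \<in> L))"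
    unfolding simp_iso_def by (rule exE)
  have b: "bij_betw f (\<Union>K) (\<Union>L)" using bc by (rule conjunct1)
  have c: "\<And>\<sigma>. \<sigma> \<subseteq> \<Union>K \<Longrightarrow> (\<sigma> \<in> K \<longleftrightarrow> f ` \<sigma> \<in> L)" using bc by simp
  let ?g = "inv_into (\<Union>K) f"
  have bg: "bij_betw ?g (\<Union>L) (\<Union>K)" using bij_betw_inv_into[OF b] .
  have gi: "?g ` \<Union>L = \<Union>K" using bij_betw_imp_surj_on[OF bg] .
  have "\<sigma> \<in> L \<longleftrightarrow> ?g ` \<sigma> \<in> K" if s: "\<sigma> \<subseteq> \<Union>L" for \<sigma>
  proof -
    have gs: "?g ` \<sigma> \<subseteq> \<Union>K" using image_mono[OF s, of ?g] gi by simp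
    have "f ` ?g ` \<sigma> = \<sigma>"
    proof -
      have "\<And>x. x \<in> \<sigma> \<Longrightarrow> f (?g x) = x" using s bij_betw_inv_into_right[OF b] by blast
      then show ?thesis by (simp add: image_image)
    qed
    moreover have "?g ` \<sigma> \<in> K \<longleftrightarrow> f ` ?g ` \<sigma> \<in> L" using c[OF gs] .
    ultimately show ?thesis by simp
  qed
  then show ?thesis unfolding simp_iso_def by (intro exI[of _ ?g] conjI allI impI bg)
qed

theorem proposition5:
  fixes d k :: nat and \<rho> :: "vtx set"
  assumes "1 \<le> d" and "1 \<le> k"
    and "\<rho> \<in> arboreal d k"
    and "card \<rho> \<le> d - 1"
  shows "simp_iso (link (arboreal d k) \<rho>) (arboreal (d - card \<rho>) k)"
proof -
  obtain \<tau> nv where t: "(\<tau>, nv) \<in> F d k" "\<rho> \<subseteq> \<tau>" using assms(3) unfolding arboreal_def by blast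
  obtain \<sigma>0 nv0 where s: "(\<sigma>0, nv0) \<in> F d k" "\<rho> \<subseteq> \<sigma>0" "\<forall>w. nv0 = Some w \<longrightarrow> w \<in> \<rho>"
    using exists_root[OF t] by blast
  have fs: "finite \<sigma>0" "card \<sigma>0 = Suc d" using card_facet[OF s(1)] by auto
  have "card (\<sigma>0 - \<rho>) = Suc (d - card \<rho>)"
    using fs s(2) assms(4) by (simp add: card_Diff_subset finite_subset)
  moreover obtain h where "bij_betw h {0..<card (\<sigma>0 - \<rho>)} (\<sigma>0 - \<rho>)"
    using ex_bij_betw_nat_finite fs(1) by blast
  ultimately have hb: "bij_betw h {0..<Suc (d - card \<rho>)} (\<sigma>0 - \<rho>)" by simp
  interpret L: lkset d k \<rho> \<sigma>0 nv0 h
    using s hb by unfold_locales auto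
  show ?thesis using simp_iso_sym[OF L.iso] .
qed

end
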